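(* Let $n,k$ be integers with $2\le 2k\le n-4$. Let $\eta=(\eta_1<\dots<\eta_l)\in\overline{\mathbb{D}}^{\,\mathrm{o}}_{2k+2}$, where $\overline{\mathbb{D}}^{\,\mathrm{o}}_{2k+2}=\mathbb{D}^{\,\mathrm{o}}_{2k+2}\setminus\{(1,2k+1)\}$ if $2k=n-4$ and $\overline{\mathbb{D}}^{\,\mathrm{o}}_{2k+2}=\mathbb{D}^{\,\mathrm{o}}_{2k+2}$ otherwise. Let $Y_{\eta^*}$ be the Young diagram whose main diagonal consists of exactly the cells $c_{1,1},\dots,c_{l+1,l+1}$ and which satisfies $h_{1,1}=2n-5$, $h_{i,i}=\eta_{l-(i-2)}$ for $2\le i\le l+1$, and $a(c_{i,i})=l(c_{i,i})$ for $1\le i\le l+1$. Let $\lambda$ be the partition whose parts are the hook lengths of the first-column cells of $Y_{\eta^*}$. Then $\lambda$ is a partition of $T_{n,n-2k}=n(n+1)/2-(n-2k)$.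
   Context: $\mathbb{D}^{\,\mathrm{o}}_N$ is the set of partitions of $N$ into distinct odd parts, i.e. sequences $(\eta_1<\dots<\eta_l)$ of odd positive integers with sum $N$ and $l\ge 2$. Young diagrams are in English convention: rows top to bottom, columns left to right, $c_{i,j}$ the cell in row $i$, column $j$; arm $a(c_{i,j})$ = number of cells to its right in its row, leg $l(c_{i,j})$ = number of cells below it in its column, hook length $h_{i,j}=a+l+1$. *)

theory Defs
  imports Main
begin

(* A Young diagram (English convention) is given by its list of row lengths,
   top to bottom: a weakly decreasing list of positive naturals.
   Rows and columns are indexed from 1; cell c_{i,j} is (i,j). *)
definition young :: "nat list \<Rightarrow> bool" where
  "young Y \<longleftrightarrow> sorted_wrt (\<ge>) Y \<and> (\<forall>r \<in> set Y. 0 < r)"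

definition in_diagram :: "nat list \<Rightarrow> nat \<Rightarrow> nat \<Rightarrow> bool" where
  "in_diagram Y i j \<longleftrightarrow> 1 \<le> i \<and> i \<le> length Y \<and> 1 \<le> j \<and> j \<le> Y ! (i - 1)"

definition arm :: "nat list \<Rightarrow> nat \<Rightarrow> nat \<Rightarrow> nat" where
  "arm Y i j = Y ! (i - 1) - j"

definition col_len :: "nat list \<Rightarrow> nat \<Rightarrow> nat" where
  "col_len Y j = card {i. in_diagram Y i j}"

definition leg :: "nat list \<Rightarrow> nat \<Rightarrow> nat \<Rightarrow> nat" where
  "leg Y i j = col_len Y j - i"

definition hook :: "nat list \<Rightarrow> nat \<Rightarrow> nat \<Rightarrow> nat" where
  "hook Y i j = arm Y i j + leg Y i j + 1"

definition distinct_odd_partitions :: "nat \<Rightarrow> nat list set" where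
  "distinct_odd_partitions N =
     {eta. sorted_wrt (<) eta \<and> (\<forall>x \<in> set eta. odd x) \<and> sum_list eta = N \<and> 2 \<le> length eta}"

definition first_col_hooks :: "nat list \<Rightarrow> nat list" where
  "first_col_hooks Y = map (\<lambda>i. hook Y i 1) [1..<length Y + 1]"

definition is_partition_of :: "nat list \<Rightarrow> int \<Rightarrow> bool" where
  "is_partition_of lam T \<longleftrightarrow>
     sorted_wrt (\<ge>) lam \<and> (\<forall>x \<in> set lam. 0 < x) \<and> int (sum_list lam) = T"

end

theory Submission
  imports Defs
begin

lemma young_mono:
  assumes "young Y" "1 \<le> a" "a \<le> b" "b \<le> length Y"
  shows "Y ! (b - 1) \<le> Y ! (a - 1)"
proof (cases "a = b")
  case False
  then have "a - 1 < b - 1" "b - 1 < length Y" using assms by auto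
  then show ?thesis using assms(1) sorted_wrt_nth_less unfolding young_def by fastforce
qed simp

lemma young_pos:
  assumes "young Y" "1 \<le> i" "i \<le> length Y"
  shows "1 \<le> Y ! (i - 1)"
  using assms unfolding young_def
  by (metis One_nat_def Suc_leI diff_less le_less_trans less_one nat_less_le nth_mem zero_less_one not_less)

lemma sum_shift1: "(\<Sum>i=1..m. f (i - 1)) = (\<Sum>i<m. (f i :: nat))" for m :: nat
  by (induction m) (auto simp: atLeastAtMostSuc_conv)

lemma cells_card:
  assumes "young Y"
  shows "card {(i,j). in_diagram Y i j} = sum_list Y"
proof -
  have "{(i,j). in_diagram Y i j} = Sigma {1..length Y} (\<lambda>i. {1..Y ! (i - 1)})"
    unfolding in_diagram_def by auto
  then have "card {(i,j). in_diagram Y i j} = (\<Sum>i=1..length Y. Y ! (i - 1))"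
    by (simp add: card_SigmaI)
  also have "\<dots> = (\<Sum>i<length Y. Y ! i)" by (rule sum_shift1)
  also have "\<dots> = sum_list Y" by (simp add: sum_list_sum_nth atLeast0LessThan)
  finally show ?thesis .
qed

lemma col_len_fin: "finite {i. in_diagram Y i j}"
  by (rule finite_subset[of _ "{1..length Y}"]) (auto simp: in_diagram_def)

lemma durfee_sum:
  assumes Y: "young Y" and d: "\<forall>i \<ge> 1. in_diagram Y i i \<longleftrightarrow> i \<le> d"
  shows "sum_list Y = (\<Sum>i=1..d. hook Y i i)"
proof -
  define A where "A = Sigma {1..d} (\<lambda>i. {i..Y ! (i - 1)})"
  define B where "B = Sigma {1..d} (\<lambda>j. {i. in_diagram Y i j \<and> j < i})"
  have dd: "in_diagram Y i i" if "1 \<le> i" "i \<le> d" for i using d that by auto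
  have S: "{(i,j). in_diagram Y i j} = A \<union> prod.swap ` B"
  proof (intro equalityI subsetI)
    fix x assume "x \<in> {(i,j). in_diagram Y i j}"
    then obtain i j where x: "x = (i,j)" and ij: "in_diagram Y i j" by auto
    show "x \<in> A \<union> prod.swap ` B"
    proof (cases "i \<le> j")
      case True
      then have "in_diagram Y i i" using ij unfolding in_diagram_def by auto
      then have "i \<le> d" using d ij unfolding in_diagram_def by auto
      then show ?thesis using ij True unfolding x A_def in_diagram_def by auto
    next
      case False
      have "Y ! (i - 1) \<le> Y ! (j - 1)" using young_mono[OF Y, of j i] ij False
        unfolding in_diagram_def by auto
      then have "in_diagram Y j j" using ij False unfolding in_diagram_def by auto
      then have "j \<le> d" using d ij unfolding in_diagram_def by auto
      then have "(j,i) \<in> B" using ij False unfolding B_def in_diagram_def by auto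
      then show ?thesis unfolding x by (metis UnI2 image_eqI swap_simp)
    qed
  next
    fix x assume "x \<in> A \<union> prod.swap ` B"
    then show "x \<in> {(i,j). in_diagram Y i j}"
    proof
      assume "x \<in> A"
      then obtain i j where x: "x = (i,j)" "1 \<le> i" "i \<le> d" "i \<le> j" "j \<le> Y ! (i - 1)"
        unfolding A_def by auto
      then show ?thesis using dd[of i] unfolding in_diagram_def by auto
    next
      assume "x \<in> prod.swap ` B"
      then show ?thesis unfolding B_def by auto
    qed
  qed
  have disj: "A \<inter> prod.swap ` B = {}" unfolding A_def B_def by auto
  have finA: "finite A" unfolding A_def by auto
  have finB: "finite B" unfolding B_def
    by (rule finite_SigmaI) (auto intro: finite_subset[OF _ col_len_fin])
  have cA: "card A = (\<Sum>i=1..d. arm Y i i + 1)"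
    unfolding A_def
    apply (subst card_SigmaI) apply auto
    apply (rule sum.cong) apply simp
    subgoal for i using dd[of i] unfolding arm_def in_diagram_def by (auto simp: Suc_diff_le)
    done
  have cB: "card B = (\<Sum>j=1..d. leg Y j j)"
  proof -
   have fin: "\<forall>j\<in>{1..d}. finite {i. in_diagram Y i j \<and> j < i}"
     by (auto intro: finite_subset[OF _ col_len_fin])
   have eq: "card {i. in_diagram Y i j \<and> j < i} = leg Y j j" if j: "j \<in> {1..d}" for j
   proof -
    have sp: "{i. in_diagram Y i j} = {1..j} \<union> {i. in_diagram Y i j \<and> j < i}"
    proof -
      have "in_diagram Y i j" if "1 \<le> i" "i \<le> j" for i
      proof -
        have "Y ! (j - 1) \<le> Y ! (i - 1)" using young_mono[OF Y, of i j] dd[of j] j that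
          unfolding in_diagram_def by auto
        then show ?thesis using dd[of j] j that unfolding in_diagram_def by auto
      qed
      then show ?thesis unfolding in_diagram_def by auto
    qed
    have "col_len Y j = card ({1..j} \<union> {i. in_diagram Y i j \<and> j < i})"
      unfolding col_len_def using sp by simp
    also have "\<dots> = j + card {i. in_diagram Y i j \<and> j < i}"
      by (subst card_Un_disjoint) (auto intro: finite_subset[OF _ col_len_fin])
    finally show "card {i. in_diagram Y i j \<and> j < i} = leg Y j j" unfolding leg_def by simp
   qed
   show ?thesis unfolding B_def by (subst card_SigmaI) (use fin eq in auto)
  qed
  have "sum_list Y = card A + card B"
    using cells_card[OF Y] S disj finA finB
    by (simp add: card_Un_disjoint card_image)
  also have "\<dots> = (\<Sum>i=1..d. hook Y i i)"
    unfolding cA cB hook_def sum.distrib[symmetric] by (rule sum.cong) auto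
  finally show ?thesis .
qed

lemma sum_shift2: "(\<Sum>i=2..l+1. g i) = (\<Sum>j<l. (g (j+2) :: nat))" for l :: nat
  by (induction l) (auto simp: atLeastAtMostSuc_conv add.commute)

lemma gauss_rev: "2 * (\<Sum>i=1..m. m - i) = m * (m - 1)" for m :: nat
proof (induction m)
  case (Suc m)
  have "(\<Sum>i=1..Suc m. Suc m - i) = (\<Sum>i=1..m. Suc m - i)"
    by (simp add: atLeastAtMostSuc_conv)
  also have "\<dots> = (\<Sum>i=1..m. (m - i) + 1)"
    by (rule sum.cong) auto
  also have "\<dots> = (\<Sum>i=1..m. m - i) + m" unfolding sum.distrib by simp
  finally show ?case using Suc by (cases m) (auto simp: algebra_simps)
qed simp

theorem proposition4p10:
  fixes n k :: nat and eta :: "nat list" and Y :: "nat list"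
  assumes "2 \<le> 2 * k" and "2 * k + 4 \<le> n"
    and "eta \<in> distinct_odd_partitions (2 * k + 2)"
    and "2 * k + 4 = n \<longrightarrow> eta \<noteq> [1, 2 * k + 1]"
    and "young Y"
    and "\<forall>i \<ge> 1. in_diagram Y i i \<longleftrightarrow> i \<le> length eta + 1"
    and "hook Y 1 1 = 2 * n - 5"
    and "\<forall>i. 2 \<le> i \<and> i \<le> length eta + 1 \<longrightarrow> hook Y i i = eta ! (length eta - (i - 2) - 1)"
    and "\<forall>i. 1 \<le> i \<and> i \<le> length eta + 1 \<longrightarrow> arm Y i i = leg Y i i"
  shows "is_partition_of (first_col_hooks Y) (int n * (int n + 1) div 2 - (int n - 2 * int k))"
proof -
  note Y = assms(5)
  define l where "l = length eta"
  define m where "m = length Y"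
  have seta: "sum_list eta = 2 * k + 2" using assms(3) unfolding distinct_odd_partitions_def by auto
  have "sum_list Y = (\<Sum>i=1..l+1. hook Y i i)"
    using durfee_sum[OF Y] assms(6) unfolding l_def by blast
  also have "\<dots> = hook Y 1 1 + (\<Sum>i=2..l+1. hook Y i i)"
    by (subst sum.atLeast_Suc_atMost) (auto simp: numeral_2_eq_2)
  also have "(\<Sum>i=2..l+1. hook Y i i) = (\<Sum>i=2..l+1. eta ! (l - (i - 2) - 1))"
    using assms(8) unfolding l_def by (intro sum.cong) auto
  also have "\<dots> = (\<Sum>j<l. eta ! (l - Suc j))"
    by (subst sum_shift2) (rule sum.cong, auto)
  also have "\<dots> = (\<Sum>j<l. eta ! j)" by (rule sum.nat_diff_reindex)
  also have "\<dots> = sum_list eta" unfolding l_def by (simp add: sum_list_sum_nth atLeast0LessThan)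
  finally have sY: "sum_list Y = 2 * n - 5 + (2 * k + 2)" using assms(7) seta by simp
  have in11: "in_diagram Y 1 1" using assms(6) by auto
  then have m1: "1 \<le> m" "1 \<le> Y ! 0" unfolding m_def in_diagram_def by auto
  have pos: "1 \<le> Y ! (i - 1)" if "1 \<le> i" "i \<le> m" for i
    using young_pos[OF Y] that unfolding m_def by auto
  have cl: "col_len Y 1 = m"
  proof -
    have "{i. in_diagram Y i 1} = {1..m}" using pos unfolding in_diagram_def m_def by auto
    then show ?thesis unfolding col_len_def by simp
  qed
  have "arm Y 1 1 = leg Y 1 1" using assms(9) by auto
  then have "Y ! 0 - 1 = m - 1" unfolding arm_def leg_def cl by simp
  then have "hook Y 1 1 = 2 * (m - 1) + 1" unfolding hook_def arm_def leg_def cl by simp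
  then have mn: "m + 2 = n" using assms(7) assms(2) m1 by simp
  have hk: "hook Y i 1 = Y ! (i - 1) + m - i" if "1 \<le> i" "i \<le> m" for i
    using pos[OF that] that unfolding hook_def arm_def leg_def cl by simp
  have fc: "first_col_hooks Y = map (\<lambda>i. Y ! (i - 1) + m - i) [1..<m+1]"
    unfolding first_col_hooks_def m_def[symmetric] by (rule map_cong) (use hk in auto)
  have sorted: "sorted_wrt (\<ge>) (first_col_hooks Y)"
    unfolding fc sorted_wrt_map
  proof (rule sorted_wrt_mono_rel[OF _ sorted_wrt_upt])
    fix x y assume "x \<in> set [1..<m+1]" "y \<in> set [1..<m+1]" "x < y"
    then show "Y ! (y - 1) + m - y \<le> Y ! (x - 1) + m - x"
      using young_mono[OF Y, of x y] unfolding m_def by auto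
  qed
  have posh: "\<forall>x \<in> set (first_col_hooks Y). 0 < x"
    unfolding fc using pos by fastforce
  have "sum_list (first_col_hooks Y) = (\<Sum>i=1..m. Y ! (i - 1) + m - i)"
    unfolding fc sum_set_upt_conv_sum_list_nat[symmetric] set_upt
    by (metis atLeastLessThanSuc_atLeastAtMost Suc_eq_plus1)
  also have "\<dots> = (\<Sum>i=1..m. Y ! (i - 1) + (m - i))"
    by (rule sum.cong) auto
  also have "\<dots> = sum_list Y + (\<Sum>i=1..m. m - i)"
  proof -
    have "(\<Sum>i=1..m. Y ! (i - 1)) = sum_list Y"
      unfolding sum_shift1[of "\<lambda>i. Y ! i"] m_def by (simp add: sum_list_sum_nth atLeast0LessThan)
    then show ?thesis by (simp only: sum.distrib)
  qed
  finally have "2 * sum_list (first_col_hooks Y) = 2 * sum_list Y + m * (m - 1)"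
    using gauss_rev[of m] by simp
  moreover have "sum_list Y = 2 * m + 2 * k + 1" using sY mn assms(1,2) by simp
  moreover have "m * (m - 1) + m = m * m" using m1 by (cases m) auto
  ultimately have e: "2 * sum_list (first_col_hooks Y) + m = m * m + 4 * m + 4 * k + 2" by simp
  define S where "S = sum_list (first_col_hooks Y)"
  have ei: "2 * int S + int m = int m * int m + 4 * int m + 4 * int k + 2"
    using e unfolding S_def[symmetric] by (metis (mono_tags) of_nat_add of_nat_mult of_nat_numeral)
  have nn: "int n = int m + 2" using mn by simp
  have "int n * (int n + 1) = 2 * (int S + (int n - 2 * int k))"
    unfolding nn using ei by (simp add: algebra_simps)
  then have "int S = int n * (int n + 1) div 2 - (int n - 2 * int k)" by simp
  then have "int (sum_list (first_col_hooks Y)) = int n * (int n + 1) div 2 - (int n - 2 * int k)"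
    unfolding S_def .
  then show ?thesis unfolding is_partition_of_def using sorted posh by simp
qed

end
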